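(* Let $(X,\mathcal{F},\mu)$ be a probability space with $L^2(X,\mu)$ infinite dimensional, and let $P$ be a reversible Markov operator on $L^2(X,\mu)$. Then for every $k\geq1$, \[ h_P(k)+\overline{h}_P(k)\leq1. \]
   Context: A Markov operator is a linear operator $P:L^2(X,\mu)\to L^2(X,\mu)$ with $P1=1$ and $Pf\geq0$ whenever $f\geq0$; it is reversible if $\int_XgPf\,d\mu=\int_XfPg\,d\mu$ for all $f,g\in L^2(X,\mu)$. Write $(f,g)_\mu=\int_Xfg\,d\mu$, $1_A$ for the indicator of $A$, $\overline{S}=X\setminus S$. $h_P(k):=\inf\max_{1\leq i\leq k}\frac{(1_{S_i},P1_{\overline{S_i}})_\mu}{\mu(S_i)}$ over all collections of $k$ pairwise disjoint measurable sets with $\mu(S_i)>0$. $\overline{h}_P(k):=\sup\min_{1\leq i\leq k}\frac{2(1_{A_{2i-1}},P1_{A_{2i}})_\mu}{\mu(A_{2i-1}\cup A_{2i})}$ over all collections of $k$ pairs of measurable sets $(A_1,A_2),\ldots,(A_{2k-1},A_{2k})$, pairwise disjoint, with $\mu(A_{2i-1}\cup A_{2i})>0$ for each $i$. *)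

theory Defs
  imports "HOL-Probability.Probability"
begin

text \<open>Elements of L^2(X,mu) are represented by measurable square-integrable
real functions; equality in L^2 is equality almost everywhere.\<close>

definition L2 :: "'a measure \<Rightarrow> ('a \<Rightarrow> real) set" where
  "L2 M = {f. f \<in> borel_measurable M \<and> integrable M (\<lambda>x. (f x)\<^sup>2)}"

definition L2_infinite_dim :: "'a measure \<Rightarrow> bool" where
  "L2_infinite_dim M \<longleftrightarrow>
     (\<forall>n::nat. \<exists>f :: nat \<Rightarrow> 'a \<Rightarrow> real. (\<forall>i<n. f i \<in> L2 M) \<and>
        (\<forall>c :: nat \<Rightarrow> real. (AE x in M. (\<Sum>i<n. c i * f i x) = 0) \<longrightarrow> (\<forall>i<n. c i = 0)))"

text \<open>A linear operator on L^2(X,mu), acting on representatives and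
compatible with a.e. equality.\<close>

definition L2_linear_operator :: "'a measure \<Rightarrow> (('a \<Rightarrow> real) \<Rightarrow> ('a \<Rightarrow> real)) \<Rightarrow> bool" where
  "L2_linear_operator M P \<longleftrightarrow>
     (\<forall>f\<in>L2 M. P f \<in> L2 M) \<and>
     (\<forall>f\<in>L2 M. \<forall>g\<in>L2 M. (AE x in M. f x = g x) \<longrightarrow> (AE x in M. P f x = P g x)) \<and>
     (\<forall>f\<in>L2 M. \<forall>g\<in>L2 M. \<forall>a b :: real.
        AE x in M. P (\<lambda>y. a * f y + b * g y) x = a * P f x + b * P g x)"

definition markov_operator :: "'a measure \<Rightarrow> (('a \<Rightarrow> real) \<Rightarrow> ('a \<Rightarrow> real)) \<Rightarrow> bool" where
  "markov_operator M P \<longleftrightarrow>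
     L2_linear_operator M P \<and>
     (AE x in M. P (\<lambda>_. 1) x = 1) \<and>
     (\<forall>f\<in>L2 M. (AE x in M. f x \<ge> 0) \<longrightarrow> (AE x in M. P f x \<ge> 0))"

definition reversible :: "'a measure \<Rightarrow> (('a \<Rightarrow> real) \<Rightarrow> ('a \<Rightarrow> real)) \<Rightarrow> bool" where
  "reversible M P \<longleftrightarrow>
     (\<forall>f\<in>L2 M. \<forall>g\<in>L2 M. (LINT x|M. g x * P f x) = (LINT x|M. f x * P g x))"

definition ip :: "'a measure \<Rightarrow> ('a \<Rightarrow> real) \<Rightarrow> ('a \<Rightarrow> real) \<Rightarrow> real" where
  "ip M f g = (LINT x|M. f x * g x)"

definition hP :: "'a measure \<Rightarrow> (('a \<Rightarrow> real) \<Rightarrow> ('a \<Rightarrow> real)) \<Rightarrow> nat \<Rightarrow> real" where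
  "hP M P k = Inf {Max ((\<lambda>i. ip M (indicator (S i)) (P (indicator (space M - S i)))
                              / measure M (S i)) ` {..<k})
                  | S :: nat \<Rightarrow> 'a set.
                    (\<forall>i<k. S i \<in> sets M \<and> measure M (S i) > 0) \<and>
                    (\<forall>i<k. \<forall>j<k. i \<noteq> j \<longrightarrow> S i \<inter> S j = {})}"

text \<open>overline h_P(k): supremum over k pairs (A_i, B_i), i < k, of the 2k
pairwise disjoint measurable sets with mu(A_i \<union> B_i) > 0, of
min_i 2 (1_{A_i}, P 1_{B_i}) / mu(A_i \<union> B_i).  (The pair (A_{2i-1},A_{2i})
of the paper is (A_i, B_i) here.)\<close>

definition hP_bar :: "'a measure \<Rightarrow> (('a \<Rightarrow> real) \<Rightarrow> ('a \<Rightarrow> real)) \<Rightarrow> nat \<Rightarrow> real" where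
  "hP_bar M P k = Sup {Min ((\<lambda>i. 2 * ip M (indicator (A i)) (P (indicator (B i)))
                              / measure M (A i \<union> B i)) ` {..<k})
                  | A B :: nat \<Rightarrow> 'a set.
                    (\<forall>i<k. A i \<in> sets M \<and> B i \<in> sets M \<and> measure M (A i \<union> B i) > 0) \<and>
                    (\<forall>i<k. \<forall>j<k. i \<noteq> j \<longrightarrow> A i \<inter> A j = {} \<and> B i \<inter> B j = {}) \<and>
                    (\<forall>i<k. \<forall>j<k. A i \<inter> B j = {})}"

end

theory Submission
  imports Defs
begin

lemma L2_ind: assumes "prob_space M" "S \<in> sets M" shows "indicator S \<in> L2 M"
proof -
  interpret prob_space M by fact
  have "(\<lambda>x. (indicator S x :: real)\<^sup>2) = indicator S" by (auto simp: indicator_def)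
  moreover have "integrable M (indicator S :: 'a \<Rightarrow> real)"
    by (rule integrable_real_indicator[OF assms(2)]) (simp add: top.not_eq_extremum[symmetric])
  ultimately show ?thesis using assms(2) unfolding L2_def by auto
qed

lemma abs_le_sq: "\<bar>y::real\<bar> \<le> 1 + y\<^sup>2"
proof (cases "\<bar>y\<bar> \<le> 1")
  case True then show ?thesis by (simp add: add_increasing2)
next
  case False
  then have "\<bar>y\<bar> * 1 \<le> \<bar>y\<bar> * \<bar>y\<bar>" by (intro mult_left_mono) auto
  then show ?thesis by (simp add: power2_eq_square abs_mult_self_eq)
qed

lemma L2_integrable: assumes "prob_space M" "f \<in> L2 M" shows "integrable M f"
proof -
  interpret prob_space M by fact
  have i1: "integrable M (\<lambda>x. 1 + (f x)\<^sup>2)" using assms(2) unfolding L2_def by auto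
  have n: "\<And>x. norm (f x) \<le> norm (1 + (f x)\<^sup>2)"
    using abs_le_sq by (simp add: add_nonneg_nonneg)
  have m: "f \<in> borel_measurable M" using assms(2) unfolding L2_def by auto
  show ?thesis
    by (rule Bochner_Integration.integrable_bound[OF i1 m], rule AE_I2, rule n)
qed

lemma ind_int: assumes "prob_space M" "S \<in> sets M" "g \<in> L2 M"
  shows "integrable M (\<lambda>x. indicator S x * g x)"
  using integrable_mult_indicator[OF assms(2) L2_integrable[OF assms(1,3)]] by simp

lemma L2_meas: "f \<in> L2 M \<Longrightarrow> f \<in> borel_measurable M" unfolding L2_def by auto

lemma key:
  assumes pr: "prob_space M" and mk: "markov_operator M P" and rv: "reversible M P"
    and A: "A \<in> sets M" and B: "B \<in> sets M" and AB: "A \<inter> B = {}"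
  shows "ip M (indicator (A\<union>B)) (P (indicator (space M - (A\<union>B))))
     \<le> measure M (A\<union>B) - 2 * ip M (indicator A) (P (indicator B))"
proof -
  interpret prob_space M by fact
  define S where "S = A \<union> B"
  have S: "S \<in> sets M" using A B S_def by auto
  have C: "space M - S \<in> sets M" using S by auto
  let ?s = "indicator S :: 'a \<Rightarrow> real"
  let ?c = "indicator (space M - S) :: 'a \<Rightarrow> real"
  let ?a = "indicator A :: 'a \<Rightarrow> real"
  let ?b = "indicator B :: 'a \<Rightarrow> real"
  have sL: "?s \<in> L2 M" and cL: "?c \<in> L2 M" and aL: "?a \<in> L2 M" and bL: "?b \<in> L2 M"
    using L2_ind[OF pr] S C A B by auto
  have spL: "indicator (space M) \<in> L2 M" using L2_ind[OF pr] by auto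
  have oneL: "(\<lambda>_. 1::real) \<in> L2 M" unfolding L2_def by auto
  from mk have into: "\<And>f. f \<in> L2 M \<Longrightarrow> P f \<in> L2 M"
    and compat: "\<And>f g. f \<in> L2 M \<Longrightarrow> g \<in> L2 M \<Longrightarrow> (AE x in M. f x = g x) \<Longrightarrow> (AE x in M. P f x = P g x)"
    and lin: "\<And>f g a b. f \<in> L2 M \<Longrightarrow> g \<in> L2 M \<Longrightarrow> AE x in M. P (\<lambda>y. a * f y + b * g y) x = a * P f x + b * P g x"
    and one: "AE x in M. P (\<lambda>_. 1) x = 1"
    and pos: "\<And>f. f \<in> L2 M \<Longrightarrow> (AE x in M. f x \<ge> 0) \<Longrightarrow> (AE x in M. P f x \<ge> 0)"
    unfolding markov_operator_def L2_linear_operator_def by auto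
  have sc: "(\<lambda>y. 1 * ?s y + 1 * ?c y) = indicator (space M)"
    using sets.sets_into_space[OF S] by (auto simp: indicator_def fun_eq_iff)
  have "AE x in M. indicator (space M) x = (1::real)" by (auto simp: indicator_def)
  then have "AE x in M. P (indicator (space M)) x = P (\<lambda>_. 1) x"
    using compat[OF spL oneL] by auto
  moreover have "AE x in M. P (indicator (space M)) x = P ?s x + P ?c x"
    using lin[OF sL cL, of 1 1] unfolding sc by simp
  ultimately have Pc: "AE x in M. P ?c x = 1 - P ?s x" using one by auto
  have ab: "(\<lambda>y. 1 * ?a y + 1 * ?b y) = ?s"
    using AB by (auto simp: indicator_def fun_eq_iff S_def)
  have Ps: "AE x in M. P ?s x = P ?a x + P ?b x"
    using lin[OF aL bL, of 1 1] unfolding ab by simp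
  have Pa: "P ?a \<in> L2 M" and Pb: "P ?b \<in> L2 M" and Pss: "P ?s \<in> L2 M" and Pcc: "P ?c \<in> L2 M"
    using into aL bL sL cL by auto
  note ms = L2_meas[OF Pa] L2_meas[OF Pb] L2_meas[OF Pss] L2_meas[OF Pcc]
  note [measurable] = ms S A B C
  have i1: "ip M ?s (P ?c) = (LINT x|M. ?s x - ?s x * P ?s x)"
    unfolding ip_def
  proof (rule integral_cong_AE)
    show "AE x in M. ?s x * P ?c x = ?s x - ?s x * P ?s x"
      using Pc by eventually_elim (simp add: right_diff_distrib)
  qed measurable
  also have "\<dots> = measure M S - (LINT x|M. ?s x * P ?s x)"
  proof -
    have "integrable M ?s"
      by (rule integrable_real_indicator[OF S]) (simp add: top.not_eq_extremum[symmetric])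
    then have "(LINT x|M. ?s x - ?s x * P ?s x) = (LINT x|M. ?s x) - (LINT x|M. ?s x * P ?s x)"
      by (rule Bochner_Integration.integral_diff[OF _ ind_int[OF pr S Pss]])
    then show ?thesis using sets.sets_into_space[OF S] by (simp add: Int_absorb2)
  qed
  finally have i1: "ip M ?s (P ?c) = measure M S - (LINT x|M. ?s x * P ?s x)" .
  have "(LINT x|M. ?s x * P ?s x) = (LINT x|M. (?a x * P ?a x + ?b x * P ?b x) + (?a x * P ?b x + ?b x * P ?a x))"
  proof (rule integral_cong_AE)
    show "AE x in M. ?s x * P ?s x = (?a x * P ?a x + ?b x * P ?b x) + (?a x * P ?b x + ?b x * P ?a x)"
      using Ps
    proof eventually_elim
      case (elim x)
      have "?s x = ?a x + ?b x" using ab by (metis (no_types, lifting) mult_1)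
      then show ?case using elim by (simp add: algebra_simps)
    qed
  qed measurable
  also have "\<dots> = (LINT x|M. ?a x * P ?a x) + (LINT x|M. ?b x * P ?b x) + ((LINT x|M. ?a x * P ?b x) + (LINT x|M. ?b x * P ?a x))"
  proof -
    note iaa = ind_int[OF pr A Pa] and iab = ind_int[OF pr A Pb] and iba = ind_int[OF pr B Pa] and ibb = ind_int[OF pr B Pb]
    have e1: "(LINT x|M. (?a x * P ?a x + ?b x * P ?b x) + (?a x * P ?b x + ?b x * P ?a x))
      = (LINT x|M. ?a x * P ?a x + ?b x * P ?b x) + (LINT x|M. ?a x * P ?b x + ?b x * P ?a x)"
      by (rule Bochner_Integration.integral_add[OF Bochner_Integration.integrable_add[OF iaa ibb] Bochner_Integration.integrable_add[OF iab iba]])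
    have e2: "(LINT x|M. ?a x * P ?a x + ?b x * P ?b x) = (LINT x|M. ?a x * P ?a x) + (LINT x|M. ?b x * P ?b x)"
      by (rule Bochner_Integration.integral_add[OF iaa ibb])
    have e3: "(LINT x|M. ?a x * P ?b x + ?b x * P ?a x) = (LINT x|M. ?a x * P ?b x) + (LINT x|M. ?b x * P ?a x)"
      by (rule Bochner_Integration.integral_add[OF iab iba])
    show ?thesis unfolding e1 e2 e3 ..
  qed
  finally have i2: "(LINT x|M. ?s x * P ?s x) = (LINT x|M. ?a x * P ?a x) + (LINT x|M. ?b x * P ?b x) + ((LINT x|M. ?a x * P ?b x) + (LINT x|M. ?b x * P ?a x))" .
  have rev: "(LINT x|M. ?b x * P ?a x) = (LINT x|M. ?a x * P ?b x)"
    using bspec[OF bspec[OF rv[unfolded reversible_def] aL] bL] by simp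
  have n1: "(LINT x|M. ?a x * P ?a x) \<ge> 0"
    using pos[OF aL] by (intro integral_nonneg_AE) auto
  have n2: "(LINT x|M. ?b x * P ?b x) \<ge> 0"
    using pos[OF bL] by (intro integral_nonneg_AE) auto
  show ?thesis using i1 i2 rev n1 n2 unfolding S_def[symmetric] ip_def by linarith
qed

lemma nonneg:
  assumes pr: "prob_space M" and mk: "markov_operator M P" and S: "S \<in> sets M"
  shows "ip M (indicator S) (P (indicator (space M - S))) \<ge> 0"
proof -
  have C: "space M - S \<in> sets M" using S by auto
  have "AE x in M. P (indicator (space M - S)) x \<ge> 0"
    using mk L2_ind[OF pr C] unfolding markov_operator_def by auto
  then show ?thesis unfolding ip_def by (intro integral_nonneg_AE) auto
qed


theorem proposition8p3:
  fixes M :: "'a measure" and P :: "('a \<Rightarrow> real) \<Rightarrow> ('a \<Rightarrow> real)" and k :: nat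
  assumes "prob_space M"
    and "L2_infinite_dim M"
    and "markov_operator M P"
    and "reversible M P"
    and "k \<ge> 1"
  shows "hP M P k + hP_bar M P k \<le> 1"
proof -
  note pr = assms(1) and mk = assms(3) and rv = assms(4)
  define F where "F = (\<lambda>(S :: nat \<Rightarrow> 'a set) i. ip M (indicator (S i)) (P (indicator (space M - S i)))
                              / measure M (S i))"
  define G where "G = (\<lambda>(A :: nat \<Rightarrow> 'a set) (B :: nat \<Rightarrow> 'a set) i. 2 * ip M (indicator (A i)) (P (indicator (B i)))
                              / measure M (A i \<union> B i))"
  define HS where "HS = {Max ((\<lambda>i. ip M (indicator (S i)) (P (indicator (space M - S i)))
                              / measure M (S i)) ` {..<k})
                  | S :: nat \<Rightarrow> 'a set.
                    (\<forall>i<k. S i \<in> sets M \<and> measure M (S i) > 0) \<and>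
                    (\<forall>i<k. \<forall>j<k. i \<noteq> j \<longrightarrow> S i \<inter> S j = {})}"
  define HB where "HB = {Min ((\<lambda>i. 2 * ip M (indicator (A i)) (P (indicator (B i)))
                              / measure M (A i \<union> B i)) ` {..<k})
                  | A B :: nat \<Rightarrow> 'a set.
                    (\<forall>i<k. A i \<in> sets M \<and> B i \<in> sets M \<and> measure M (A i \<union> B i) > 0) \<and>
                    (\<forall>i<k. \<forall>j<k. i \<noteq> j \<longrightarrow> A i \<inter> A j = {} \<and> B i \<inter> B j = {}) \<and>
                    (\<forall>i<k. \<forall>j<k. A i \<inter> B j = {})}"
  have hPe: "hP M P k = Inf HS" unfolding hP_def HS_def ..
  have hBe: "hP_bar M P k = Sup HB" unfolding hP_bar_def HB_def ..
  have k0: "0 < k" using assms(5) by auto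
  then have kne: "{..<k} \<noteq> {}" by auto
  have HS_nonneg: "x \<ge> 0" if "x \<in> HS" for x
  proof -
    from that obtain S where x: "x = Max ((\<lambda>i. ip M (indicator (S i)) (P (indicator (space M - S i)))
                              / measure M (S i)) ` {..<k})"
      and c: "\<forall>i<k. S i \<in> sets M \<and> measure M (S i) > 0" unfolding HS_def by blast
    have "0 \<le> ip M (indicator (S 0)) (P (indicator (space M - S 0))) / measure M (S 0)"
      using nonneg[OF pr mk, of "S 0"] c k0 by auto
    also have "\<dots> \<le> x" unfolding x by (rule Max_ge) (use k0 in auto)
    finally show ?thesis .
  qed
  have claim: "\<exists>x\<in>HS. x \<le> 1 - m" if "m \<in> HB" for m
  proof -
    from that obtain A B where m: "m = Min ((\<lambda>i. 2 * ip M (indicator (A i)) (P (indicator (B i)))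
                              / measure M (A i \<union> B i)) ` {..<k})"
      and c1: "\<forall>i<k. A i \<in> sets M \<and> B i \<in> sets M \<and> measure M (A i \<union> B i) > 0"
      and c2: "\<forall>i<k. \<forall>j<k. i \<noteq> j \<longrightarrow> A i \<inter> A j = {} \<and> B i \<inter> B j = {}"
      and c3: "\<forall>i<k. \<forall>j<k. A i \<inter> B j = {}"
      unfolding HB_def by blast
    define S where "S = (\<lambda>i. A i \<union> B i)"
    define x where "x = Max ((\<lambda>i. ip M (indicator (S i)) (P (indicator (space M - S i)))
                              / measure M (S i)) ` {..<k})"
    have "x \<in> HS" unfolding HS_def x_def
    proof (rule CollectI, rule exI[of _ S], intro conjI refl allI impI)
      fix i assume i: "i < k"
      then show "S i \<in> sets M" "measure M (S i) > 0" using c1 unfolding S_def by auto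
    next
      fix i j assume "i < k" "j < k" "i \<noteq> j"
      then show "S i \<inter> S j = {}" using c2 c3 unfolding S_def by blast
    qed
    moreover have "x \<le> 1 - m" unfolding x_def
    proof (subst Max_le_iff, simp, simp add: kne, intro ballI)
      fix y assume "y \<in> (\<lambda>i. ip M (indicator (S i)) (P (indicator (space M - S i))) / measure M (S i)) ` {..<k}"
      then obtain i where i: "i < k" and y: "y = ip M (indicator (S i)) (P (indicator (space M - S i))) / measure M (S i)"
        by auto
      have Ai: "A i \<in> sets M" and Bi: "B i \<in> sets M" and mu: "measure M (A i \<union> B i) > 0"
        using c1 i by auto
      have ABi: "A i \<inter> B i = {}" using c3 i by auto
      have kk: "ip M (indicator (S i)) (P (indicator (space M - S i)))
         \<le> measure M (S i) - 2 * ip M (indicator (A i)) (P (indicator (B i)))"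
        using key[OF pr mk rv Ai Bi ABi] unfolding S_def by simp
      have "y \<le> (measure M (S i) - 2 * ip M (indicator (A i)) (P (indicator (B i)))) / measure M (S i)"
        unfolding y by (rule divide_right_mono[OF kk]) (use mu S_def in auto)
      also have "\<dots> = 1 - 2 * ip M (indicator (A i)) (P (indicator (B i))) / measure M (A i \<union> B i)"
        using mu unfolding S_def by (simp add: diff_divide_distrib)
      also have "\<dots> \<le> 1 - m"
      proof -
        have "m \<le> 2 * ip M (indicator (A i)) (P (indicator (B i))) / measure M (A i \<union> B i)"
          unfolding m by (rule Min_le) (use i in auto)
        then show ?thesis by linarith
      qed
      finally show "y \<le> 1 - m" .
    qed
    ultimately show ?thesis by blast
  qed
  show ?thesis
  proof (cases "HB = {}")
    case True
    have "HS = {}"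
    proof (rule ccontr)
      assume "HS \<noteq> {}"
      then obtain x where "x \<in> HS" by blast
      then obtain S where c: "\<forall>i<k. S i \<in> sets M \<and> measure M (S i) > 0"
          and d: "\<forall>i<k. \<forall>j<k. i \<noteq> j \<longrightarrow> S i \<inter> S j = {}" unfolding HS_def by blast
      have "Min ((\<lambda>i. 2 * ip M (indicator (S i)) (P (indicator ((\<lambda>_. {}) i)))
                              / measure M (S i \<union> (\<lambda>_. {}) i)) ` {..<k}) \<in> HB"
        unfolding HB_def
        by (rule CollectI, rule exI[of _ S], rule exI[of _ "\<lambda>_. {}"]) (use c d in auto)
      then show False using True by blast
    qed
    then show ?thesis unfolding hPe hBe using True by (simp add: Inf_real_def)
  next
    case False
    have bdd: "bdd_below HS" using HS_nonneg by (intro bdd_belowI) auto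
    have "Sup HB \<le> 1 - Inf HS"
    proof (rule cSup_least[OF False])
      fix m assume "m \<in> HB"
      then obtain x where "x \<in> HS" "x \<le> 1 - m" using claim by blast
      moreover have "Inf HS \<le> x" by (rule cInf_lower[OF \<open>x \<in> HS\<close> bdd])
      ultimately show "m \<le> 1 - Inf HS" by linarith
    qed
    then show ?thesis unfolding hPe hBe by linarith
  qed
qed

end
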